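(* Let $p$ be a prime, let $G$ be a finite $p$-group and let $C$ be a subgroup of $G$ of index $p$. Then for every $g \in G \setminus C$ we have $\log_p |G'| \leq b(g) + \log_p |C'|$.
   Context: $G'$ and $C'$ denote the derived subgroups of $G$ and $C$. For $g$ in a finite $p$-group $G$, the breadth $b(g)$ is defined by $|G : C_G(g)| = p^{b(g)}$, where $C_G(g)$ is the centralizer of $g$ in $G$. *)

theory Defs
  imports "HOL-Algebra.Algebra" Complex_Main
begin

definition centralizer :: "('a, 'b) monoid_scheme \<Rightarrow> 'a \<Rightarrow> 'a set" where
  "centralizer G g = {x \<in> carrier G. x \<otimes>\<^bsub>G\<^esub> g = g \<otimes>\<^bsub>G\<^esub> x}"

definition breadth :: "('a, 'b) monoid_scheme \<Rightarrow> nat \<Rightarrow> 'a \<Rightarrow> nat" where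
  "breadth G p g = (THE b. card (rcosets\<^bsub>G\<^esub> (centralizer G g)) = p ^ b)"

end

theory Submission
  imports Defs "HOL-Algebra.Multiplicative_Group" "HOL-Computational_Algebra.Primes"
begin

definition comm :: "('a, 'b) monoid_scheme \<Rightarrow> 'a \<Rightarrow> 'a \<Rightarrow> 'a" where
  "comm G a b = a \<otimes>\<^bsub>G\<^esub> b \<otimes>\<^bsub>G\<^esub> inv\<^bsub>G\<^esub> a \<otimes>\<^bsub>G\<^esub> inv\<^bsub>G\<^esub> b"


lemma (in group) fin_closed_subgroup:
  assumes fin: "finite (carrier G)" and sub: "H \<subseteq> carrier G" and one: "\<one> \<in> H"
    and mult: "\<And>a b. a \<in> H \<Longrightarrow> b \<in> H \<Longrightarrow> a \<otimes> b \<in> H"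
  shows "subgroup H G"
proof (rule subgroupI)
  show "H \<subseteq> carrier G" by fact
  show "H \<noteq> {}" using one by blast
  show "a \<otimes> b \<in> H" if "a \<in> H" "b \<in> H" for a b using mult that .
  fix a assume a: "a \<in> H"
  have aG: "a \<in> carrier G" using a sub by blast
  have pw: "a [^] (n::nat) \<in> H" for n
    by (induction n) (use one a mult in \<open>auto simp: nat_pow_Suc\<close>)
  have pos: "order G > 0" using fin unfolding order_def
    using one sub by (auto simp: card_gt_0_iff)
  have "a [^] (order G - 1) \<otimes> a = \<one>"
    using pow_order_eq_1[OF aG] pos
    by (metis Suc_diff_1 nat_pow_Suc)
  hence "inv a = a [^] (order G - 1)"
    using aG by (metis inv_equality nat_pow_closed)
  thus "inv a \<in> H" using pw by simp
qed

lemma (in group) index_p_fill: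
  assumes fin: "finite (carrier G)" and p: "Factorial_Ring.prime (p::nat)"
    and C: "subgroup C G" and idx: "card (rcosets C) = p"
    and H: "subgroup H G" and CH: "C \<subseteq> H" and x: "x \<in> H" "x \<notin> C"
  shows "H = carrier G"
proof -
  have l1: "card (rcosets C) * card C = order G" by (rule lagrange[OF C])
  have l2: "card (rcosets H) * card H = order G" by (rule lagrange[OF H])
  have CsH: "subgroup C (G\<lparr>carrier := H\<rparr>)" by (rule subgroup_incl[OF C H CH])
  have gH: "group (G\<lparr>carrier := H\<rparr>)" by (rule subgroup.subgroup_is_group[OF H is_group])
  have l3: "card (rcosets\<^bsub>G\<lparr>carrier := H\<rparr>\<^esub> C) * card C = card H"
    using group.lagrange[OF gH CsH] by (simp add: order_def)
  define a where "a = card (rcosets\<^bsub>G\<lparr>carrier := H\<rparr>\<^esub> C)"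
  define b where "b = card (rcosets H)"
  have finH: "finite H" using fin H subgroup.subset finite_subset by blast
  have cC: "card C > 0" using C fin subgroup.finite_imp_card_positive by blast
  have "a * b * card C = p * card C" using l1 l2 l3 idx unfolding a_def b_def
    by (metis mult.assoc mult.commute)
  hence ab: "a * b = p" using cC by simp
  have "card C < card H" using CH x finH by (metis psubsetI psubset_card_mono)
  hence "a \<noteq> 1" using l3 unfolding a_def by auto
  hence "b = 1" using ab p by (metis prime_product)
  hence "card H = order G" using l2 unfolding b_def by simp
  thus ?thesis using H fin subgroup.subset unfolding order_def
    by (metis card_subset_eq)
qed

lemma (in group) index_p_normal:
  assumes fin: "finite (carrier G)" and p: "Factorial_Ring.prime (p::nat)"
    and pn: "order G = p ^ n"
    and C: "subgroup C G" and idx: "card (rcosets C) = p"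
  shows "C \<lhd> G"
proof -
  define E where "E = {H. H \<subseteq> carrier G}"
  define \<phi> where "\<phi> = (\<lambda>g. \<lambda>H \<in> E. g <# H #> inv g)"
  define GC where "GC = G\<lparr>carrier := C\<rparr>"
  have act: "group_action GC E \<phi>"
    using group_action.induced_action[OF action_by_conjugation_on_power_set C]
    unfolding \<phi>_def GC_def E_def .
  have CG: "C \<subseteq> carrier G" using C subgroup.subset by blast
  define R where "R = rcosets C"
  have RE: "R \<subseteq> E" unfolding R_def E_def RCOSETS_def using CG r_coset_subset_G by auto
  have Rdest: "\<exists>x. x \<in> carrier G \<and> W = C #> x" if "W \<in> R" for W
    using that unfolding R_def RCOSETS_def by auto
  have finE: "finite E" unfolding E_def using fin by simp
  have p1: "p > 1" using p prime_gt_1_nat by blast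
  have phiR: "\<phi> c (C #> x) = C #> (x \<otimes> inv c)" if c: "c \<in> C" and x: "x \<in> carrier G" for c x
  proof -
    have cG: "c \<in> carrier G" using c CG by blast
    have "C #> x \<in> E" unfolding E_def using CG x r_coset_subset_G by auto
    hence "\<phi> c (C #> x) = c <# (C #> x) #> inv c" unfolding \<phi>_def by simp
    also have "\<dots> = (c <# C) #> x #> inv c" using coset_assoc[OF cG x CG] by simp
    also have "c <# C = C" using coset_join3[OF cG C c] .
    finally show ?thesis using coset_mult_assoc CG x cG by simp
  qed
  have carGC: "carrier GC = C" unfolding GC_def by simp
  have orbI: "orbit GC \<phi> W = (\<lambda>c. \<phi> c W) ` C" for W
    unfolding orbit_def carGC by auto
  have orbC: "orbit GC \<phi> C = {C}"
  proof -
    have "\<phi> c C = C" if c: "c \<in> C" for c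
    proof -
      have ic: "inv c \<in> C" using subgroup.m_inv_closed[OF C c] .
      have "\<phi> c (C #> \<one>) = C #> (\<one> \<otimes> inv c)" using phiR[OF c one_closed] .
      moreover have "C #> \<one> = C" using coset_mult_one[OF CG] .
      moreover have "\<one> \<otimes> inv c = inv c" using ic CG by auto
      moreover have "C #> inv c = C" using subgroup.rcos_const[OF C is_group ic] .
      ultimately show ?thesis by simp
    qed
    moreover have "C \<noteq> {}" using C subgroup.one_closed by blast
    ultimately show ?thesis unfolding orbI by auto
  qed
  have orbR: "orbit GC \<phi> W \<subseteq> R" if WR: "W \<in> R" for W
  proof
    fix Y assume "Y \<in> orbit GC \<phi> W"
    then obtain c where c: "c \<in> C" "Y = \<phi> c W" unfolding orbI by blast
    obtain x where x: "x \<in> carrier G" "W = C #> x" using Rdest[OF WR] by blast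
    have "Y = C #> (x \<otimes> inv c)" using phiR[OF c(1) x(1)] c x by simp
    moreover have "x \<otimes> inv c \<in> carrier G" using m_closed[OF x(1) inv_closed[OF subsetD[OF CG c(1)]]] .
    ultimately show "Y \<in> R" unfolding R_def RCOSETS_def by blast
  qed
  have cardorb: "\<exists>k. card (orbit GC \<phi> W) = p ^ k" if "W \<in> E" for W
  proof -
    have "card (orbit GC \<phi> W) * card (stabilizer GC \<phi> W) = order GC"
      using group_action.orbit_stabilizer_theorem[OF act that] .
    hence "card (orbit GC \<phi> W) dvd card C" unfolding order_def carGC by (metis dvd_triv_left)
    moreover have "card C dvd p ^ n" using lagrange[OF C] pn by (metis dvd_triv_right)
    ultimately have "card (orbit GC \<phi> W) dvd p ^ n" by (rule dvd_trans)
    thus ?thesis using divides_primepow_nat[OF p] by blast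
  qed
  have CR: "C \<in> R"
  proof -
    have "C #> \<one> \<in> R" unfolding R_def RCOSETS_def by blast
    thus ?thesis using coset_mult_one[OF CG] by simp
  qed
  have "\<exists>W\<in>R. W \<noteq> C \<and> \<not> p dvd card (orbit GC \<phi> W)"
  proof (rule ccontr)
    assume H: "\<not> ?thesis"
    define f where "f = (\<lambda>W. if W \<in> R then 1 else 0 :: nat)"
    have s1: "(\<Sum>orb\<in>orbits GC E \<phi>. \<Sum>W\<in>orb. f W) = (\<Sum>W\<in>E. f W)"
      using group_action.disjoint_sum[OF act finE] .
    have s2: "(\<Sum>W\<in>E. f W) = card R"
      unfolding f_def using RE finE by (simp add: sum.If_cases Int_absorb1)
    have each: "(\<Sum>W\<in>orb. f W) mod p = (if orb = {C} then 1 else 0)"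
      if orb: "orb \<in> orbits GC E \<phi>" for orb
    proof (cases "orb \<inter> R = {}")
      case True
      hence "(\<Sum>W\<in>orb. f W) = 0" unfolding f_def by (intro sum.neutral) auto
      moreover have "orb \<noteq> {C}" using True CR by blast
      ultimately show ?thesis by simp
    next
      case False
      then obtain Z where Z: "Z \<in> orb" "Z \<in> R" by blast
      have ZE: "Z \<in> E" using Z RE by blast
      have oZ: "orbit GC \<phi> Z \<in> orbits GC E \<phi>" unfolding orbits_def using ZE by blast
      have "Z \<in> orbit GC \<phi> Z" using group_action.orbit_refl[OF act ZE] .
      hence eq: "orbit GC \<phi> Z = orb"
        using partition.disjoint_union[OF group_action.orbit_partition[OF act] oZ orb] Z by blast
      hence sub: "orb \<subseteq> R" using orbR Z by blast
      hence "(\<Sum>W\<in>orb. f W) = card orb" unfolding f_def by (simp add: subset_iff)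
      moreover have "card orb mod p = (if orb = {C} then 1 else 0)"
      proof (cases "Z = C")
        case True
        thus ?thesis using eq orbC p1 by auto
      next
        case False
        hence "p dvd card orb" using H Z eq by blast
        moreover have "orb \<noteq> {C}" using False Z by blast
        ultimately show ?thesis by simp
      qed
      ultimately show ?thesis by simp
    qed
    have finO: "finite (orbits GC E \<phi>)" unfolding orbits_def using finE by simp
    have CinO: "{C} \<in> orbits GC E \<phi>" unfolding orbits_def using orbC CR RE by blast
    have "card R mod p = (\<Sum>orb\<in>orbits GC E \<phi>. \<Sum>W\<in>orb. f W) mod p" using s1 s2 by simp
    also have "\<dots> = (\<Sum>orb\<in>orbits GC E \<phi>. (\<Sum>W\<in>orb. f W) mod p) mod p" by (simp add: mod_sum_eq)
    also have "\<dots> = (\<Sum>orb\<in>orbits GC E \<phi>. (if orb = {C} then 1 else 0)) mod p"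
      using each by simp
    also have "\<dots> = 1" using finO CinO p1 by (simp add: sum.delta)
    finally show False using idx R_def p1 by simp
  qed
  then obtain W where W: "W \<in> R" "W \<noteq> C" "\<not> p dvd card (orbit GC \<phi> W)" by blast
  have XE: "W \<in> E" using W RE by blast
  obtain k where k: "card (orbit GC \<phi> W) = p ^ k" using cardorb[OF XE] by blast
  have "k = 0" using k W(3) by (cases k) auto
  hence c1: "card (orbit GC \<phi> W) = 1" using k by simp
  have "W \<in> orbit GC \<phi> W" using group_action.orbit_refl[OF act XE] .
  moreover obtain a where "orbit GC \<phi> W = {a}" using c1 card_1_singletonE by blast
  ultimately have oX: "orbit GC \<phi> W = {W}" by simp
  obtain x where x: "x \<in> carrier G" "W = C #> x" using Rdest[OF W(1)] by blast
  have xC: "x \<notin> C"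
  proof
    assume "x \<in> C"
    hence "C #> x = C" using subgroup.rcos_const[OF C is_group] by blast
    thus False using W(2) x by simp
  qed
  have xn: "x \<otimes> c \<otimes> inv x \<in> C" if c: "c \<in> C" for c
  proof -
    have ic: "inv c \<in> C" using subgroup.m_inv_closed[OF C c] .
    have "\<phi> (inv c) W \<in> orbit GC \<phi> W" unfolding orbI by (rule image_eqI[OF refl ic])
    hence fx: "\<phi> (inv c) W = W" using oX by simp
    have "\<phi> (inv c) (C #> x) = C #> (x \<otimes> inv (inv c))" using phiR[OF ic x(1)] .
    moreover have "inv (inv c) = c" using c CG by auto
    ultimately have "\<phi> (inv c) W = C #> (x \<otimes> c)" using x(2) by simp
    hence eq: "C #> (x \<otimes> c) = C #> x" using fx x(2) by simp
    have xc: "x \<otimes> c \<in> carrier G" using x c CG by blast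
    have "x \<otimes> c \<in> C #> (x \<otimes> c)" using rcos_self[OF xc C] .
    hence "x \<otimes> c \<in> C #> x" using eq by simp
    thus ?thesis by (rule subgroup.rcos_module_imp[OF C is_group x(1)])
  qed
  define T where "T = {y \<in> carrier G. \<forall>c\<in>C. y \<otimes> c \<otimes> inv y \<in> C}"
  have Tsub: "subgroup T G"
  proof (rule fin_closed_subgroup[OF fin])
    show "T \<subseteq> carrier G" unfolding T_def by blast
    show "\<one> \<in> T" unfolding T_def using CG by auto
    fix a b assume a: "a \<in> T" and b: "b \<in> T"
    have aG: "a \<in> carrier G" and bG: "b \<in> carrier G" using a b unfolding T_def by auto
    have "a \<otimes> b \<otimes> c \<otimes> inv (a \<otimes> b) \<in> C" if c: "c \<in> C" for c
    proof -
      have "b \<otimes> c \<otimes> inv b \<in> C" using b c unfolding T_def by blast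
      hence "a \<otimes> (b \<otimes> c \<otimes> inv b) \<otimes> inv a \<in> C" using a unfolding T_def by blast
      moreover have "a \<otimes> (b \<otimes> c \<otimes> inv b) \<otimes> inv a = a \<otimes> b \<otimes> c \<otimes> inv (a \<otimes> b)"
        using aG bG c CG by (simp add: m_assoc inv_mult_group subset_iff)
      ultimately show ?thesis by simp
    qed
    thus "a \<otimes> b \<in> T" unfolding T_def using aG bG by blast
  qed
  have CT: "C \<subseteq> T" unfolding T_def using C CG
    by (auto intro!: subgroup.m_closed subgroup.m_inv_closed)
  have xT: "x \<in> T" unfolding T_def using x xn by blast
  have "T = carrier G" using index_p_fill[OF fin p C idx Tsub CT xT xC] .
  thus ?thesis using normal_inv_iff C unfolding T_def by blast
qed


context group
begin

lemma canc1: "x \<in> carrier G \<Longrightarrow> y \<in> carrier G \<Longrightarrow> x \<otimes> (inv x \<otimes> y) = y"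
  by (simp add: m_assoc[symmetric])
lemma canc2: "x \<in> carrier G \<Longrightarrow> y \<in> carrier G \<Longrightarrow> inv x \<otimes> (x \<otimes> y) = y"
  by (simp add: m_assoc[symmetric])

lemmas gsimps = m_assoc inv_mult_group canc1 canc2

lemma comm_closed: "a \<in> carrier G \<Longrightarrow> b \<in> carrier G \<Longrightarrow> comm G a b \<in> carrier G"
  by (simp add: comm_def)

lemma comm_mult: "a \<in> carrier G \<Longrightarrow> b \<in> carrier G \<Longrightarrow> y \<in> carrier G \<Longrightarrow>
   comm G (a \<otimes> b) y = a \<otimes> comm G b y \<otimes> inv a \<otimes> comm G a y"
  by (simp add: comm_def gsimps)

lemma comm_conj: "c \<in> carrier G \<Longrightarrow> k \<in> carrier G \<Longrightarrow> c \<otimes> k \<otimes> inv c = comm G c k \<otimes> k"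
  by (simp add: comm_def gsimps)

lemma comm_inv: "a \<in> carrier G \<Longrightarrow> b \<in> carrier G \<Longrightarrow> comm G b a = inv (comm G a b)"
  by (simp add: comm_def gsimps)

lemma comm_one: "b \<in> carrier G \<Longrightarrow> comm G \<one> b = \<one>"
  by (simp add: comm_def gsimps)

lemma comm_self: "b \<in> carrier G \<Longrightarrow> comm G b b = \<one>"
  by (simp add: comm_def gsimps)

lemma ident_M: "d1 \<in> carrier G \<Longrightarrow> d2 \<in> carrier G \<Longrightarrow> c1 \<in> carrier G \<Longrightarrow> c2 \<in> carrier G \<Longrightarrow> g \<in> carrier G \<Longrightarrow>
  d1 \<otimes> comm G c1 g \<otimes> (d2 \<otimes> comm G c2 g) =
  (d1 \<otimes> (comm G c1 g \<otimes> d2 \<otimes> inv (comm G c1 g)) \<otimes> inv (comm G c2 (comm G c1 g))) \<otimes> comm G (c2 \<otimes> c1) g"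
  by (simp add: comm_def gsimps)

lemma ident_C: "c \<in> carrier G \<Longrightarrow> d \<in> carrier G \<Longrightarrow> k \<in> carrier G \<Longrightarrow>
  c \<otimes> (d \<otimes> k) \<otimes> inv c = (c \<otimes> d \<otimes> inv c \<otimes> comm G c k) \<otimes> k"
  by (simp add: comm_def gsimps)

lemma ident_g: "c \<in> carrier G \<Longrightarrow> d \<in> carrier G \<Longrightarrow> g \<in> carrier G \<Longrightarrow>
  g \<otimes> (d \<otimes> comm G c g) \<otimes> inv g = (g \<otimes> d \<otimes> inv g) \<otimes> comm G (g \<otimes> c \<otimes> inv g) g"
  by (simp add: comm_def gsimps)

lemma ident_Z: "z \<in> carrier G \<Longrightarrow> x \<in> carrier G \<Longrightarrow> g \<in> carrier G \<Longrightarrow> z \<otimes> g = g \<otimes> z \<Longrightarrow>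
  comm G (inv (z \<otimes> x)) g = comm G (inv x) g"
proof -
  assume a: "z \<in> carrier G" "x \<in> carrier G" "g \<in> carrier G" "z \<otimes> g = g \<otimes> z"
  have "inv z \<otimes> (g \<otimes> z) = g" using a by (metis canc2)
  hence "inv z \<otimes> (g \<otimes> (z \<otimes> x)) = g \<otimes> x" using a by (simp add: m_assoc[symmetric])
  thus ?thesis using a by (simp add: comm_def gsimps)
qed

lemma fcs:
  assumes fin: "finite (carrier G)" and sub: "H \<subseteq> carrier G" and one: "\<one> \<in> H"
    and mult: "\<And>a b. a \<in> H \<Longrightarrow> b \<in> H \<Longrightarrow> a \<otimes> b \<in> H"
  shows "subgroup H G"
proof (rule subgroupI)
  show "H \<subseteq> carrier G" by fact
  show "H \<noteq> {}" using one by blast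
  show "a \<otimes> b \<in> H" if "a \<in> H" "b \<in> H" for a b using mult that .
  fix a assume a: "a \<in> H"
  have aG: "a \<in> carrier G" using a sub by blast
  have pw: "a [^] (n::nat) \<in> H" for n
    by (induction n) (use one a mult in \<open>auto simp: nat_pow_Suc\<close>)
  have pos: "order G > 0" using fin one sub unfolding order_def
    by (auto simp: card_gt_0_iff)
  have "a [^] (order G - 1) \<otimes> a = \<one>"
    using pow_order_eq_1[OF aG] pos
    by (metis Suc_diff_1 nat_pow_Suc)
  hence "inv a = a [^] (order G - 1)"
    using aG by (metis inv_equality nat_pow_closed)
  thus "inv a \<in> H" using pw by simp
qed

lemma main_bound:
  assumes fin: "finite (carrier G)" and Cn: "C \<lhd> G" and gG: "g \<in> carrier G" and gC: "g \<notin> C"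
    and fill: "\<And>H. subgroup H G \<Longrightarrow> C \<subseteq> H \<Longrightarrow> g \<in> H \<Longrightarrow> H = carrier G"
  shows "card (derived G (carrier G)) \<le> card (rcosets (centralizer G g)) * card (derived G C)"
proof -
  have C: "subgroup C G" using Cn normal_imp_subgroup by blast
  have CG: "C \<subseteq> carrier G" using subgroup.subset[OF C] .
  define D where "D = derived G C"
  have Dn: "D \<lhd> G" unfolding D_def using derived_is_normal[OF Cn] .
  have D: "subgroup D G" using Dn normal_imp_subgroup by blast
  have DG: "D \<subseteq> carrier G" using subgroup.subset[OF D] .
  have DC: "D \<subseteq> C" unfolding D_def using derived_incl[OF subset_refl C] .
  have F1: "comm G a b \<in> D" if a: "a \<in> C" and b: "b \<in> C" for a b
  proof -
    have "comm G a b \<in> derived_set G C" unfolding comm_def using a b by blast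
    thus ?thesis unfolding D_def derived_def by (rule generate.incl)
  qed
  have F2: "comm G c g \<in> C" if c: "c \<in> C" for c
  proof -
    have cG: "c \<in> carrier G" using c CG by blast
    have "g \<otimes> inv c \<otimes> inv g \<in> C"
      using normal.inv_op_closed2[OF Cn gG subgroup.m_inv_closed[OF C c]] .
    hence "c \<otimes> (g \<otimes> inv c \<otimes> inv g) \<in> C" using subgroup.m_closed[OF C c] by blast
    moreover have "c \<otimes> (g \<otimes> inv c \<otimes> inv g) = comm G c g" unfolding comm_def
      using cG gG by (simp add: m_assoc)
    ultimately show ?thesis by simp
  qed
  define K where "K = (\<lambda>c. comm G c g) ` C"
  have KC: "K \<subseteq> C" unfolding K_def using F2 by blast
  define M where "M = D <#> K"
  have Mmem: "d \<otimes> k \<in> M" if "d \<in> D" "k \<in> K" for d k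
    unfolding M_def set_mult_def using that by blast
  have Mdest: "\<exists>d c. d \<in> D \<and> c \<in> C \<and> m = d \<otimes> comm G c g" if "m \<in> M" for m
    using that unfolding M_def set_mult_def K_def by blast
  have oneK: "\<one> \<in> K"
  proof -
    have "comm G \<one> g \<in> K" unfolding K_def using subgroup.one_closed[OF C] by (rule imageI)
    thus ?thesis using comm_one[OF gG] by simp
  qed
  have DM: "D \<subseteq> M"
  proof
    fix d assume d: "d \<in> D"
    have "d \<otimes> \<one> \<in> M" using Mmem[OF d oneK] .
    thus "d \<in> M" using d DG by auto
  qed
  have KM: "K \<subseteq> M"
  proof
    fix k assume k: "k \<in> K"
    have "\<one> \<otimes> k \<in> M" using Mmem[OF subgroup.one_closed[OF D] k] .
    thus "k \<in> M" using k KC CG by auto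
  qed
  have MG: "M \<subseteq> carrier G"
  proof
    fix m assume "m \<in> M"
    then obtain d c where dc: "d \<in> D" "c \<in> C" "m = d \<otimes> comm G c g" using Mdest by blast
    thus "m \<in> carrier G" using DG CG gG by (auto intro!: comm_closed)
  qed
  have M: "subgroup M G"
  proof (rule fcs[OF fin MG])
    show "\<one> \<in> M" using DM subgroup.one_closed[OF D] by blast
    fix a b assume a: "a \<in> M" and b: "b \<in> M"
    obtain d1 c1 where 1: "d1 \<in> D" "c1 \<in> C" "a = d1 \<otimes> comm G c1 g" using Mdest[OF a] by blast
    obtain d2 c2 where 2: "d2 \<in> D" "c2 \<in> C" "b = d2 \<otimes> comm G c2 g" using Mdest[OF b] by blast
    have G1: "d1 \<in> carrier G" "d2 \<in> carrier G" "c1 \<in> carrier G" "c2 \<in> carrier G"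
      using 1 2 DG CG by auto
    have k1C: "comm G c1 g \<in> C" using F2[OF 1(2)] .
    have k1G: "comm G c1 g \<in> carrier G" using k1C CG by blast
    have e1: "comm G c1 g \<otimes> d2 \<otimes> inv (comm G c1 g) \<in> D"
      using normal.inv_op_closed2[OF Dn k1G 2(1)] .
    have e2: "inv (comm G c2 (comm G c1 g)) \<in> D"
      using subgroup.m_inv_closed[OF D F1[OF 2(2) k1C]] .
    have e3: "d1 \<otimes> (comm G c1 g \<otimes> d2 \<otimes> inv (comm G c1 g)) \<otimes> inv (comm G c2 (comm G c1 g)) \<in> D"
      using subgroup.m_closed[OF D subgroup.m_closed[OF D 1(1) e1] e2] .
    have e4: "comm G (c2 \<otimes> c1) g \<in> K" unfolding K_def
      using subgroup.m_closed[OF C 2(2) 1(2)] by (rule imageI)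
    have "a \<otimes> b = (d1 \<otimes> (comm G c1 g \<otimes> d2 \<otimes> inv (comm G c1 g)) \<otimes> inv (comm G c2 (comm G c1 g))) \<otimes> comm G (c2 \<otimes> c1) g"
      unfolding 1(3) 2(3) using ident_M[OF G1 gG] .
    thus "a \<otimes> b \<in> M" using Mmem[OF e3 e4] by simp
  qed
  define N where "N = {x \<in> carrier G. \<forall>m\<in>M. x \<otimes> m \<otimes> inv x \<in> M}"
  have N: "subgroup N G"
  proof (rule fcs[OF fin])
    show "N \<subseteq> carrier G" unfolding N_def by blast
    show "\<one> \<in> N" unfolding N_def using MG by auto
    fix a b assume a: "a \<in> N" and b: "b \<in> N"
    have aG: "a \<in> carrier G" and bG: "b \<in> carrier G" using a b unfolding N_def by auto
    have "a \<otimes> b \<otimes> m \<otimes> inv (a \<otimes> b) \<in> M" if m: "m \<in> M" for m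
    proof -
      have mG: "m \<in> carrier G" using m MG by blast
      have "b \<otimes> m \<otimes> inv b \<in> M" using b m unfolding N_def by blast
      hence "a \<otimes> (b \<otimes> m \<otimes> inv b) \<otimes> inv a \<in> M" using a unfolding N_def by blast
      moreover have "a \<otimes> (b \<otimes> m \<otimes> inv b) \<otimes> inv a = a \<otimes> b \<otimes> m \<otimes> inv (a \<otimes> b)"
        using aG bG mG by (simp add: m_assoc inv_mult_group)
      ultimately show ?thesis by simp
    qed
    thus "a \<otimes> b \<in> N" unfolding N_def using aG bG by blast
  qed
  have CN: "C \<subseteq> N"
  proof
    fix c assume c: "c \<in> C"
    have cG: "c \<in> carrier G" using c CG by blast
    have "c \<otimes> m \<otimes> inv c \<in> M" if m: "m \<in> M" for m
    proof -
      obtain d c1 where 1: "d \<in> D" "c1 \<in> C" "m = d \<otimes> comm G c1 g" using Mdest[OF m] by blast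
      have kC: "comm G c1 g \<in> C" using F2[OF 1(2)] .
      have kG: "comm G c1 g \<in> carrier G" using kC CG by blast
      have dG: "d \<in> carrier G" using 1 DG by blast
      have "c \<otimes> d \<otimes> inv c \<otimes> comm G c (comm G c1 g) \<in> D"
        using subgroup.m_closed[OF D normal.inv_op_closed2[OF Dn cG 1(1)] F1[OF c kC]] .
      moreover have "comm G c1 g \<in> K" unfolding K_def using 1(2) by (rule imageI)
      ultimately have "(c \<otimes> d \<otimes> inv c \<otimes> comm G c (comm G c1 g)) \<otimes> comm G c1 g \<in> M" by (rule Mmem)
      thus ?thesis unfolding 1(3) using ident_C[OF cG dG kG] by simp
    qed
    thus "c \<in> N" unfolding N_def using cG by blast
  qed
  have gN: "g \<in> N"
  proof -
    have "g \<otimes> m \<otimes> inv g \<in> M" if m: "m \<in> M" for m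
    proof -
      obtain d c1 where 1: "d \<in> D" "c1 \<in> C" "m = d \<otimes> comm G c1 g" using Mdest[OF m] by blast
      have dG: "d \<in> carrier G" using 1 DG by blast
      have c1G: "c1 \<in> carrier G" using 1 CG by blast
      have "g \<otimes> d \<otimes> inv g \<in> D" using normal.inv_op_closed2[OF Dn gG 1(1)] .
      moreover have "comm G (g \<otimes> c1 \<otimes> inv g) g \<in> K" unfolding K_def
        using normal.inv_op_closed2[OF Cn gG 1(2)] by (rule imageI)
      ultimately have "(g \<otimes> d \<otimes> inv g) \<otimes> comm G (g \<otimes> c1 \<otimes> inv g) g \<in> M" by (rule Mmem)
      thus ?thesis unfolding 1(3) using ident_g[OF c1G dG gG] by simp
    qed
    thus "g \<in> N" unfolding N_def using gG by blast
  qed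
  have NG: "N = carrier G" using fill[OF N CN gN] .
  have Mconj: "x \<otimes> m \<otimes> inv x \<in> M" if "x \<in> carrier G" "m \<in> M" for x m
    using that NG unfolding N_def by blast
  define V where "V = (\<lambda>y. {x \<in> carrier G. comm G x y \<in> M})"
  have V: "subgroup (V y) G" if yG: "y \<in> carrier G" for y
  proof (rule fcs[OF fin])
    show "V y \<subseteq> carrier G" unfolding V_def by blast
    show "\<one> \<in> V y" unfolding V_def using comm_one[OF yG] subgroup.one_closed[OF M] by simp
    fix a b assume a: "a \<in> V y" and b: "b \<in> V y"
    have aG: "a \<in> carrier G" and bG: "b \<in> carrier G" using a b unfolding V_def by auto
    have "a \<otimes> comm G b y \<otimes> inv a \<in> M" using Mconj[OF aG] b unfolding V_def by blast
    hence "a \<otimes> comm G b y \<otimes> inv a \<otimes> comm G a y \<in> M"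
      using subgroup.m_closed[OF M] a unfolding V_def by blast
    hence "comm G (a \<otimes> b) y \<in> M" using comm_mult[OF aG bG yG] by simp
    thus "a \<otimes> b \<in> V y" unfolding V_def using aG bG by blast
  qed
  have sym: "comm G y x \<in> M" if "comm G x y \<in> M" "x \<in> carrier G" "y \<in> carrier G" for x y
    using comm_inv[OF that(2,3)] subgroup.m_inv_closed[OF M that(1)] by simp
  have VgG: "V g = carrier G"
  proof (rule fill[OF V[OF gG]])
    show "C \<subseteq> V g"
    proof
      fix c assume c: "c \<in> C"
      have "comm G c g \<in> M" using KM c unfolding K_def by blast
      thus "c \<in> V g" unfolding V_def using c CG by blast
    qed
    show "g \<in> V g" unfolding V_def using gG comm_self[OF gG] subgroup.one_closed[OF M] by simp
  qed
  have VcG: "V c = carrier G" if c: "c \<in> C" for c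
  proof -
    have cG: "c \<in> carrier G" using c CG by blast
    show ?thesis
    proof (rule fill[OF V[OF cG]])
      show "C \<subseteq> V c"
      proof
        fix c' assume c': "c' \<in> C"
        have "comm G c' c \<in> M" using DM F1[OF c' c] by blast
        thus "c' \<in> V c" unfolding V_def using c' CG by blast
      qed
      have "comm G c g \<in> M" using VgG cG unfolding V_def by blast
      hence "comm G g c \<in> M" using sym cG gG by blast
      thus "g \<in> V c" unfolding V_def using gG by blast
    qed
  qed
  have allM: "comm G x y \<in> M" if x: "x \<in> carrier G" and y: "y \<in> carrier G" for x y
  proof -
    have "V x = carrier G"
    proof (rule fill[OF V[OF x]])
      show "C \<subseteq> V x"
      proof
        fix c assume c: "c \<in> C"
        have cG: "c \<in> carrier G" using c CG by blast
        have "comm G x c \<in> M" using VcG[OF c] x unfolding V_def by blast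
        hence "comm G c x \<in> M" using sym x cG by blast
        thus "c \<in> V x" unfolding V_def using cG by blast
      qed
      have "comm G x g \<in> M" using VgG x unfolding V_def by blast
      hence "comm G g x \<in> M" using sym x gG by blast
      thus "g \<in> V x" unfolding V_def using gG by blast
    qed
    hence "comm G y x \<in> M" using y unfolding V_def by blast
    thus ?thesis using sym x y by blast
  qed
  have "derived_set G (carrier G) \<subseteq> M"
  proof
    fix h assume "h \<in> derived_set G (carrier G)"
    then obtain h1 h2 where h: "h1 \<in> carrier G" "h2 \<in> carrier G" "h = comm G h1 h2"
      unfolding comm_def by blast
    thus "h \<in> M" using allM by blast
  qed
  hence GM: "derived G (carrier G) \<subseteq> M"
    unfolding derived_def by (rule generate_subgroup_incl[OF _ M])
  have finD: "finite D" using fin DG finite_subset by blast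
  have finK: "finite K" using fin KC CG finite_subset unfolding K_def by blast
  have finM: "finite M" using fin MG finite_subset by blast
  have "M = (\<lambda>(d, k). d \<otimes> k) ` (D \<times> K)" unfolding M_def set_mult_def by auto
  hence cM: "card M \<le> card D * card K"
    using card_image_le[of "D \<times> K" "\<lambda>(d, k). d \<otimes> k"] finD finK by (simp add: card_cartesian_product)
  define Z where "Z = centralizer G g"
  define h where "h = (\<lambda>R. comm G (inv (SOME y. y \<in> R)) g)"
  have Kim: "K \<subseteq> h ` (rcosets Z)"
  proof
    fix k assume "k \<in> K"
    then obtain c where c: "c \<in> C" "k = comm G c g" unfolding K_def by blast
    define x where "x = inv c"
    have xG: "x \<in> carrier G" unfolding x_def using c CG by auto
    have kx: "k = comm G (inv x) g" unfolding x_def using c CG by auto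
    have R: "Z #> x \<in> rcosets Z" unfolding RCOSETS_def using xG by blast
    have ZG: "Z \<subseteq> carrier G" unfolding Z_def centralizer_def by blast
    have xin: "x \<in> Z #> x" unfolding r_coset_def Z_def centralizer_def using xG gG
      by (auto intro!: bexI[of _ \<one>])
    hence "(SOME y. y \<in> Z #> x) \<in> Z #> x" by (rule someI)
    then obtain z where z: "z \<in> Z" "(SOME y. y \<in> Z #> x) = z \<otimes> x" unfolding r_coset_def by blast
    have zG: "z \<in> carrier G" and zg: "z \<otimes> g = g \<otimes> z" using z(1) unfolding Z_def centralizer_def by auto
    have "h (Z #> x) = k" unfolding h_def z(2) kx using ident_Z[OF zG xG gG zg] .
    thus "k \<in> h ` (rcosets Z)" using R by (metis imageI)
  qed
  have finR: "finite (rcosets Z)"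
  proof -
    have "rcosets Z \<subseteq> Pow (carrier G)" unfolding RCOSETS_def r_coset_def Z_def centralizer_def by auto
    thus ?thesis using fin finite_subset by blast
  qed
  have "card K \<le> card (h ` (rcosets Z))" using Kim finR by (simp add: card_mono)
  also have "\<dots> \<le> card (rcosets Z)" using finR by (rule card_image_le)
  finally have cK: "card K \<le> card (rcosets Z)" .
  have "card (derived G (carrier G)) \<le> card M" using card_mono[OF finM GM] .
  also have "\<dots> \<le> card D * card K" by (rule cM)
  also have "\<dots> \<le> card (rcosets Z) * card D" using cK by (simp add: mult.commute)
  finally show ?thesis unfolding Z_def D_def .
qed


end

lemma (in group) centralizer_subgroup:
  assumes fin: "finite (carrier G)" and gG: "g \<in> carrier G"
  shows "subgroup (centralizer G g) G"
proof (rule fcs[OF fin])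
  show "centralizer G g \<subseteq> carrier G" unfolding centralizer_def by blast
  show "\<one> \<in> centralizer G g" unfolding centralizer_def using gG by simp
  fix a b assume a: "a \<in> centralizer G g" and b: "b \<in> centralizer G g"
  have aG: "a \<in> carrier G" and ag: "a \<otimes> g = g \<otimes> a" using a unfolding centralizer_def by auto
  have bG: "b \<in> carrier G" and bg: "b \<otimes> g = g \<otimes> b" using b unfolding centralizer_def by auto
  have "a \<otimes> b \<otimes> g = a \<otimes> (b \<otimes> g)" using aG bG gG by (simp add: m_assoc)
  also have "\<dots> = a \<otimes> g \<otimes> b" using aG bG gG bg by (simp add: m_assoc)
  also have "\<dots> = g \<otimes> (a \<otimes> b)" using aG bG gG ag by (simp add: m_assoc)
  finally show "a \<otimes> b \<in> centralizer G g" unfolding centralizer_def using aG bG by simp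
qed

theorem lemma2p1:
  fixes G (structure) and p :: nat and C :: "'a set" and g :: 'a
  assumes "Factorial_Ring.prime p"
    and "group G" and "finite (carrier G)" and "\<exists>n. order G = p ^ n"
    and "subgroup C G" and "card (rcosets C) = p"
    and "g \<in> carrier G - C"
  shows "log (real p) (real (card (derived G (carrier G))))
           \<le> real (breadth G p g) + log (real p) (real (card (derived G C)))"
proof -
  interpret group G by fact
  have p: "Factorial_Ring.prime p" and fin: "finite (carrier G)" and C: "subgroup C G"
    and idx: "card (rcosets C) = p" and gG: "g \<in> carrier G" and gC: "g \<notin> C"
    using assms by auto
  obtain n where n: "order G = p ^ n" using assms(4) by blast
  have p1: "p > 1" using p prime_gt_1_nat by blast
  have Cn: "C \<lhd> G" using index_p_normal[OF fin p n C idx] .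
  have fill: "\<And>H. subgroup H G \<Longrightarrow> C \<subseteq> H \<Longrightarrow> g \<in> H \<Longrightarrow> H = carrier G"
    using index_p_fill[OF fin p C idx] gC by blast
  have bound: "card (derived G (carrier G)) \<le> card (rcosets (centralizer G g)) * card (derived G C)"
    using main_bound[OF fin Cn gG gC fill] .
  have Z: "subgroup (centralizer G g) G" using centralizer_subgroup[OF fin gG] .
  have "card (rcosets (centralizer G g)) * card (centralizer G g) = p ^ n"
    using lagrange[OF Z] n by simp
  hence "card (rcosets (centralizer G g)) dvd p ^ n" by (metis dvd_triv_left)
  then obtain i where i: "card (rcosets (centralizer G g)) = p ^ i"
    using divides_primepow_nat[OF p] by blast
  have br: "breadth G p g = i"
    unfolding breadth_def
  proof (rule the_equality)
    show "card (rcosets (centralizer G g)) = p ^ i" by (rule i)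
    fix b assume "card (rcosets (centralizer G g)) = p ^ b"
    thus "b = i" using i p1 by (simp add: power_inject_exp)
  qed
  have CG: "C \<subseteq> carrier G" using subgroup.subset[OF C] .
  have a0: "card (derived G (carrier G)) > 0"
    using subgroup.finite_imp_card_positive[OF derived_is_subgroup[OF subset_refl] fin] .
  have b0: "card (derived G C) > 0"
    using subgroup.finite_imp_card_positive[OF derived_is_subgroup[OF CG] fin] .
  define a where "a = card (derived G (carrier G))"
  define b where "b = card (derived G C)"
  have ab: "real a \<le> real p ^ i * real b" using bound i unfolding a_def b_def
    by (metis of_nat_le_iff of_nat_mult of_nat_power)
  have rp: "real p > 1" using p1 by simp
  have "log (real p) (real a) \<le> log (real p) (real p ^ i * real b)"
    using ab a0 b0 rp unfolding a_def b_def by (subst log_le_cancel_iff) auto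
  also have "\<dots> = log (real p) (real p ^ i) + log (real p) (real b)"
    using b0 rp unfolding b_def by (subst log_mult) auto
  also have "log (real p) (real p ^ i) = real i"
    using rp by (simp add: log_nat_power)
  finally show ?thesis unfolding a_def b_def br .
qed

end
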